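(* Let $\mathfrak{n}=\mathfrak{v}\oplus\mathfrak{z}$ be a fat 2-step nilpotent real Lie algebra with center $\mathfrak{z}$ of dimension $m$. Then $$\dim\big(\operatorname{Aut}(\mathfrak{n})/\operatorname{Aut}_0(\mathfrak{n})\big)\le 1+m(m-1)/2,$$ with equality achieved for any algebra of Heisenberg type of the same dimension and with center of the same dimension.
   Context: $\mathfrak{n}=\mathfrak{v}\oplus\mathfrak{z}$ with bracket $[\ ,\ ]:\mathfrak{v}\times\mathfrak{v}\to\mathfrak{z}$, $\mathfrak{z}$ the center. Fat: for every nonzero $\lambda\in\mathfrak{z}^*$ the form $\lambda([u,v])$ on $\mathfrak{v}$ is non-degenerate. $\operatorname{Aut}(\mathfrak{n})$ is the Lie algebra automorphism group and $\operatorname{Aut}_0(\mathfrak{n})$ its normal subgroup of automorphisms acting trivially on the center $\mathfrak{z}$. $\mathfrak{n}$ is of Heisenberg type if there are inner products on $\mathfrak{v},\mathfrak{z}$ such that $T_z$ defined by $\langle T_zu,v\rangle=\langle z,[u,v]\rangle$ satisfies $T_z^2=-|z|^2I$ for all $z\in\mathfrak{z}$. *)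

theory Defs
  imports "HOL-Analysis.Analysis"
begin

text \<open>A 2-step nilpotent real Lie algebra n = v + z is given by a skew-symmetric bilinear
  map B : v x v -> z; the Lie bracket on the product space is
  [(u,a),(w,b)] = (0, B u w).\<close>

definition nil_bracket :: "('v::real_vector \<Rightarrow> 'v \<Rightarrow> 'z::real_vector) \<Rightarrow> 'v \<times> 'z \<Rightarrow> 'v \<times> 'z \<Rightarrow> 'v \<times> 'z" where
  "nil_bracket B x y = (0, B (fst x) (fst y))"

definition skew_bilinear :: "('v::real_vector \<Rightarrow> 'v \<Rightarrow> 'z::real_vector) \<Rightarrow> bool" where
  "skew_bilinear B \<longleftrightarrow> bilinear B \<and> (\<forall>u. B u u = 0)"

text \<open>z is the center of n (i.e. no nonzero element of v is central).\<close>
definition center_is_z :: "('v::real_vector \<Rightarrow> 'v \<Rightarrow> 'z::real_vector) \<Rightarrow> bool" where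
  "center_is_z B \<longleftrightarrow> (\<forall>u. (\<forall>w. B u w = 0) \<longrightarrow> u = 0)"

definition fat :: "('v::real_vector \<Rightarrow> 'v \<Rightarrow> 'z::real_vector) \<Rightarrow> bool" where
  "fat B \<longleftrightarrow> (\<forall>l::'z \<Rightarrow> real. linear l \<and> (\<exists>a. l a \<noteq> 0) \<longrightarrow>
      (\<forall>u. (\<forall>w. l (B u w) = 0) \<longrightarrow> u = 0))"

definition inner_product_form :: "('a::real_vector \<Rightarrow> 'a \<Rightarrow> real) \<Rightarrow> bool" where
  "inner_product_form g \<longleftrightarrow> bilinear g \<and> (\<forall>x y. g x y = g y x) \<and> (\<forall>x. x \<noteq> 0 \<longrightarrow> g x x > 0)"

definition heisenberg_type :: "('v::real_vector \<Rightarrow> 'v \<Rightarrow> 'z::real_vector) \<Rightarrow> bool" where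
  "heisenberg_type B \<longleftrightarrow> skew_bilinear B \<and>
     (\<exists>gv gz. inner_product_form gv \<and> inner_product_form gz \<and>
        (\<forall>z. \<exists>T. linear T \<and> (\<forall>u w. gv (T u) w = gz z (B u w)) \<and>
                 (\<forall>u. T (T u) = - (gz z z) *\<^sub>R u)))"

definition Aut :: "('v::euclidean_space \<Rightarrow> 'v \<Rightarrow> 'z::euclidean_space) \<Rightarrow> (('v \<times> 'z) \<Rightarrow>\<^sub>L ('v \<times> 'z)) set" where
  "Aut B = {f. bij (blinfun_apply f) \<and>
     (\<forall>x y. f (nil_bracket B x y) = nil_bracket B (f x) (f y))}"

definition Aut0 :: "('v::euclidean_space \<Rightarrow> 'v \<Rightarrow> 'z::euclidean_space) \<Rightarrow> (('v \<times> 'z) \<Rightarrow>\<^sub>L ('v \<times> 'z)) set" where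
  "Aut0 B = {f \<in> Aut B. \<forall>a. f (0, a) = (0, a)}"

definition lie_alg :: "('a::real_normed_vector \<Rightarrow>\<^sub>L 'a) set \<Rightarrow> ('a \<Rightarrow>\<^sub>L 'a) set" where
  "lie_alg G = {X. \<exists>\<gamma>. \<gamma> 0 = id_blinfun \<and> (\<forall>t. \<gamma> t \<in> G) \<and> (\<gamma> has_vector_derivative X) (at 0)}"

text \<open>Dimension of the Lie group Aut(n)/Aut_0(n) = dim Aut(n) - dim Aut_0(n).\<close>
definition dim_Aut_quot :: "('v::euclidean_space \<Rightarrow> 'v \<Rightarrow> 'z::euclidean_space) \<Rightarrow> real" where
  "dim_Aut_quot B = real (dim (lie_alg (Aut B))) - real (dim (lie_alg (Aut0 B)))"

end

theory Submission
  imports Defs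
begin
typedef (overloaded) 'a endo = "UNIV :: ('a::euclidean_space \<Rightarrow>\<^sub>L 'a) set"
  morphisms Rep_endo Abs_endo by simp

setup_lifting type_definition_endo

instantiation endo :: (euclidean_space) real_normed_vector
begin
lift_definition norm_endo :: "'a endo \<Rightarrow> real" is norm .
lift_definition minus_endo :: "'a endo \<Rightarrow> 'a endo \<Rightarrow> 'a endo" is "(-)" .
lift_definition plus_endo :: "'a endo \<Rightarrow> 'a endo \<Rightarrow> 'a endo" is "(+)" .
lift_definition uminus_endo :: "'a endo \<Rightarrow> 'a endo" is "uminus" .
lift_definition zero_endo :: "'a endo" is 0 .
lift_definition scaleR_endo :: "real \<Rightarrow> 'a endo \<Rightarrow> 'a endo" is scaleR .
definition dist_endo :: "'a endo \<Rightarrow> 'a endo \<Rightarrow> real" where "dist_endo a b = norm (a - b)"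
definition uniformity_endo :: "('a endo \<times> 'a endo) filter" where
  "uniformity_endo = (INF e\<in>{0 <..}. principal {(x, y). dist x y < e})"
definition open_endo :: "'a endo set \<Rightarrow> bool" where
  "open_endo S = (\<forall>x\<in>S. \<forall>\<^sub>F (x', y) in uniformity. x' = x \<longrightarrow> y \<in> S)"
definition sgn_endo :: "'a endo \<Rightarrow> 'a endo" where "sgn_endo x = scaleR (inverse (norm x)) x"
instance
  apply standard
  unfolding dist_endo_def open_endo_def sgn_endo_def uniformity_endo_def
  apply (rule refl | (transfer, force simp: norm_triangle_ineq algebra_simps scaleR_add_right scaleR_add_left))+
  done
end

instantiation endo :: (euclidean_space) real_normed_algebra_1
begin
lift_definition times_endo :: "'a endo \<Rightarrow> 'a endo \<Rightarrow> 'a endo" is "(o\<^sub>L)" .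
lift_definition one_endo :: "'a endo" is id_blinfun .
instance
  apply standard
  apply (transfer; rule blinfun_eqI; simp add: blinfun.bilinear_simps)+
  apply (transfer, metis norm_blinfun_id norm_zero zero_neq_one)
  apply (transfer, rule norm_blinfun_compose)
  apply (transfer, simp)
  done
end

lemma tendsto_Rep_endo_iff: "(X \<longlongrightarrow> L) F \<longleftrightarrow> ((\<lambda>n. Rep_endo (X n)) \<longlongrightarrow> Rep_endo L) F"
  unfolding tendsto_iff dist_norm
  by (simp add: minus_endo.rep_eq[symmetric] norm_endo.rep_eq[symmetric])

instance endo :: (euclidean_space) banach
proof
  fix X :: "nat \<Rightarrow> 'a endo" assume "Cauchy X"
  then have "Cauchy (\<lambda>n. Rep_endo (X n))"
    unfolding Cauchy_def dist_norm by (simp add: minus_endo.rep_eq[symmetric] norm_endo.rep_eq[symmetric])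
  then obtain L where "(\<lambda>n. Rep_endo (X n)) \<longlonglongrightarrow> L" using Cauchy_convergent_iff convergent_def by blast
  then have "X \<longlonglongrightarrow> Abs_endo L" unfolding tendsto_Rep_endo_iff by (simp add: Abs_endo_inverse)
  then show "convergent X" by (auto simp: convergent_def)
qed

lemma bounded_linear_Rep_endo: "bounded_linear Rep_endo"
  apply (rule bounded_linear_intro[where K=1])
  apply (transfer, simp)+
  done

section \<open>Exponential curves of endomorphisms\<close>

definition expc :: "('a::euclidean_space \<Rightarrow>\<^sub>L 'a) \<Rightarrow> real \<Rightarrow> ('a \<Rightarrow>\<^sub>L 'a)" where
  "expc D t = Rep_endo (exp (t *\<^sub>R Abs_endo D))"

lemma expc_0: "expc D 0 = id_blinfun"
  by (simp add: expc_def one_endo.rep_eq)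

lemma expc_deriv: "(expc D has_vector_derivative (expc D t o\<^sub>L D)) (at t)"
proof -
  have "((\<lambda>t. exp (t *\<^sub>R Abs_endo D)) has_vector_derivative exp (t *\<^sub>R Abs_endo D) * Abs_endo D) (at t)"
    by (rule exp_scaleR_has_vector_derivative_right)
  from bounded_linear.has_vector_derivative[OF bounded_linear_Rep_endo this]
  show ?thesis unfolding expc_def[abs_def] by (simp add: times_endo.rep_eq Abs_endo_inverse)
qed

lemma expc_comm: "expc D t o\<^sub>L D = D o\<^sub>L expc D t"
proof -
  have "exp (t *\<^sub>R Abs_endo D) * Abs_endo D = Abs_endo D * exp (t *\<^sub>R Abs_endo D)"
    using vector_derivative_unique_at[OF exp_scaleR_has_vector_derivative_right exp_scaleR_has_vector_derivative_left]
    by blast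
  then have "Rep_endo (exp (t *\<^sub>R Abs_endo D) * Abs_endo D) = Rep_endo (Abs_endo D * exp (t *\<^sub>R Abs_endo D))"
    by simp
  then show ?thesis by (simp add: expc_def times_endo.rep_eq Abs_endo_inverse)
qed

lemma expc_neg: "expc (-D) t = expc D (-t)"
proof -
  have "Abs_endo (-D) = - Abs_endo D" by (simp add: uminus_endo.abs_eq eq_onp_def)
  then show ?thesis by (simp add: expc_def)
qed

lemma expc_inv1: "expc D t o\<^sub>L expc D (-t) = id_blinfun"
proof -
  have "exp (t *\<^sub>R Abs_endo D) * exp (- (t *\<^sub>R Abs_endo D)) = 1" by (rule exp_minus_inverse)
  then have "Rep_endo (exp (t *\<^sub>R Abs_endo D) * exp ((-t) *\<^sub>R Abs_endo D)) = Rep_endo 1" by simp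
  then show ?thesis by (simp add: expc_def times_endo.rep_eq one_endo.rep_eq)
qed

lemma expc_inv2: "expc D (-t) o\<^sub>L expc D t = id_blinfun"
  using expc_inv1[of D "-t"] by simp

lemma expc_inv_apply: "expc D (-t) (expc D t x) = x" "expc D t (expc D (-t) x) = x"
proof -
  have "(expc D (-t) o\<^sub>L expc D t) x = x" by (simp only: expc_inv2) simp
  then show "expc D (-t) (expc D t x) = x" by simp
  have "(expc D t o\<^sub>L expc D (-t)) x = x" by (simp only: expc_inv1) simp
  then show "expc D t (expc D (-t) x) = x" by simp
qed

lemma expc_deriv0: "(expc D has_vector_derivative D) (at 0)"
proof -
  have "id_blinfun o\<^sub>L D = D" by (rule blinfun_eqI) simp
  then show ?thesis using expc_deriv[of D 0] by (simp add: expc_0)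
qed

section \<open>Derivations\<close>

definition Der :: "('v::euclidean_space \<Rightarrow> 'v \<Rightarrow> 'z::euclidean_space) \<Rightarrow> (('v \<times> 'z) \<Rightarrow>\<^sub>L ('v \<times> 'z)) set" where
  "Der B = {D. \<forall>x y. blinfun_apply D (nil_bracket B x y) = nil_bracket B (blinfun_apply D x) y + nil_bracket B x (blinfun_apply D y)}"

definition Der0 :: "('v::euclidean_space \<Rightarrow> 'v \<Rightarrow> 'z::euclidean_space) \<Rightarrow> (('v \<times> 'z) \<Rightarrow>\<^sub>L ('v \<times> 'z)) set" where
  "Der0 B = {D \<in> Der B. \<forall>a. blinfun_apply D (0, a) = 0}"

lemma bilinear_nil_bracket:
  assumes "bilinear B"
  shows "bilinear (nil_bracket B)"
proof -
  have l1: "linear (B u)" and l2: "linear (\<lambda>u. B u w)" for u w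
    using assms unfolding bilinear_def by auto
  show ?thesis
    unfolding bilinear_def nil_bracket_def
  proof (intro conjI allI)
    fix x :: "'a \<times> 'b"
    show "linear (\<lambda>y. (0::'a, B (fst x) (fst y)))"
      by (rule linearI) (simp_all add: linear_add[OF l1] linear_scale[OF l1])
  next
    fix y :: "'a \<times> 'b"
    show "linear (\<lambda>x. (0::'a, B (fst x) (fst y)))"
      by (rule linearI) (simp_all add: linear_add[OF l2] linear_scale[OF l2])
  qed
qed

lemma bb_nil_bracket:
  fixes B :: "'v::euclidean_space \<Rightarrow> 'v \<Rightarrow> 'z::euclidean_space"
  assumes "bilinear B"
  shows "bounded_bilinear (nil_bracket B)"
  using bilinear_nil_bracket[OF assms] bilinear_conv_bounded_bilinear by blast

lemma apply_vd:
  assumes "(\<gamma> has_vector_derivative X) F"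
  shows "((\<lambda>t. blinfun_apply (\<gamma> t) c) has_vector_derivative X c) F"
  using bounded_linear.has_vector_derivative[OF blinfun.bounded_linear_left assms] .

lemma lie_alg_Aut_sub:
  fixes B :: "'v::euclidean_space \<Rightarrow> 'v \<Rightarrow> 'z::euclidean_space"
  assumes "bilinear B"
  shows "lie_alg (Aut B) \<subseteq> Der B"
proof
  fix X assume "X \<in> lie_alg (Aut B)"
  then obtain \<gamma> where g0: "\<gamma> 0 = id_blinfun" and gA: "\<And>t. \<gamma> t \<in> Aut B"
    and gd: "(\<gamma> has_vector_derivative X) (at 0)" unfolding lie_alg_def by blast
  interpret nb: bounded_bilinear "nil_bracket B" by (rule bb_nil_bracket[OF assms])
  show "X \<in> Der B" unfolding Der_def
  proof (intro CollectI allI)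
    fix x y
    have h: "\<And>t x y. \<gamma> t (nil_bracket B x y) = nil_bracket B (\<gamma> t x) (\<gamma> t y)"
      using gA unfolding Aut_def by blast
    have e: "(\<lambda>t. \<gamma> t (nil_bracket B x y)) = (\<lambda>t. nil_bracket B (\<gamma> t x) (\<gamma> t y))"
      by (simp only: h)
    have d1: "((\<lambda>t. \<gamma> t (nil_bracket B x y)) has_vector_derivative X (nil_bracket B x y)) (at 0)"
      by (rule apply_vd[OF gd])
    have d2: "((\<lambda>t. nil_bracket B (\<gamma> t x) (\<gamma> t y)) has_vector_derivative
        (nil_bracket B (\<gamma> 0 x) (X y) + nil_bracket B (X x) (\<gamma> 0 y))) (at 0)"
      using nb.has_vector_derivative[OF apply_vd[OF gd, where c=x] apply_vd[OF gd, where c=y]] by simp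
    show "X (nil_bracket B x y) = nil_bracket B (X x) y + nil_bracket B x (X y)"
      using vector_derivative_unique_at[OF d1 d2[folded e]] g0 by (simp add: add.commute)
  qed
qed

lemma lie_alg_Aut0_sub:
  fixes B :: "'v::euclidean_space \<Rightarrow> 'v \<Rightarrow> 'z::euclidean_space"
  assumes "bilinear B"
  shows "lie_alg (Aut0 B) \<subseteq> Der0 B"
proof
  fix X assume X: "X \<in> lie_alg (Aut0 B)"
  then obtain \<gamma> where g0: "\<gamma> 0 = id_blinfun" and gA: "\<And>t. \<gamma> t \<in> Aut0 B"
    and gd: "(\<gamma> has_vector_derivative X) (at 0)" unfolding lie_alg_def by blast
  have "X \<in> lie_alg (Aut B)" using X unfolding lie_alg_def Aut0_def by blast
  then have "X \<in> Der B" using lie_alg_Aut_sub[OF assms] by blast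
  moreover have "X (0, a) = 0" for a
  proof -
    have e: "(\<lambda>t. \<gamma> t (0, a)) = (\<lambda>t. (0, a))" using gA unfolding Aut0_def by auto
    have "((\<lambda>t. \<gamma> t (0, a)) has_vector_derivative X (0, a)) (at 0)" by (rule apply_vd[OF gd])
    then show ?thesis unfolding e using vector_derivative_unique_at has_vector_derivative_const by blast
  qed
  ultimately show "X \<in> Der0 B" unfolding Der0_def by blast
qed

lemma expc_apply_deriv: "((\<lambda>t. expc D t x) has_vector_derivative D (expc D t x)) (at t)"
proof -
  have "((\<lambda>t. expc D t x) has_vector_derivative (expc D t o\<^sub>L D) x) (at t)"
    by (rule apply_vd[OF expc_deriv])
  then show ?thesis by (simp add: expc_comm)
qed

lemma Der_in_lie_alg:
  fixes B :: "'v::euclidean_space \<Rightarrow> 'v \<Rightarrow> 'z::euclidean_space"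
  assumes "bilinear B" and D: "D \<in> Der B"
  shows "expc D t \<in> Aut B"
proof -
  interpret nb: bounded_bilinear "nil_bracket B" by (rule bb_nil_bracket[OF assms(1)])
  have bij: "bij (blinfun_apply (expc D t))"
  proof (rule o_bij[where g="blinfun_apply (expc D (-t))"])
    show "blinfun_apply (expc D (-t)) \<circ> blinfun_apply (expc D t) = id"
      by (rule ext) (simp add: expc_inv_apply)
    show "blinfun_apply (expc D t) \<circ> blinfun_apply (expc D (-t)) = id"
      by (rule ext) (simp add: expc_inv_apply)
  qed
  have br: "expc D t (nil_bracket B x y) = nil_bracket B (expc D t x) (expc D t y)" for x y
  proof -
    define w where "w s = nil_bracket B (expc D s x) (expc D s y)" for s
    define \<Psi> where "\<Psi> s = expc (-D) s (w s)" for s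
    have dw: "(w has_vector_derivative D (w s)) (at s)" for s
    proof -
      have "(w has_vector_derivative (nil_bracket B (expc D s x) (D (expc D s y)) + nil_bracket B (D (expc D s x)) (expc D s y))) (at s)"
        unfolding w_def[abs_def] by (rule nb.has_vector_derivative[OF expc_apply_deriv expc_apply_deriv])
      moreover have "nil_bracket B (expc D s x) (D (expc D s y)) + nil_bracket B (D (expc D s x)) (expc D s y) = D (w s)"
      proof -
        have h: "\<And>x y. D (nil_bracket B x y) = nil_bracket B (D x) y + nil_bracket B x (D y)"
          using D unfolding Der_def by blast
        show ?thesis unfolding w_def h by (simp add: add.commute)
      qed
      ultimately show ?thesis by simp
    qed
    have dP: "(\<Psi> has_vector_derivative 0) (at s within UNIV)" for s
    proof -
      have "(\<Psi> has_vector_derivative (expc (-D) s (D (w s)) + (expc (-D) s o\<^sub>L (-D)) (w s))) (at s)"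
        unfolding \<Psi>_def[abs_def] by (rule blinfun.has_vector_derivative[OF expc_deriv dw])
      moreover have "expc (-D) s (D (w s)) + (expc (-D) s o\<^sub>L (-D)) (w s) = 0"
        by (simp add: blinfun.bilinear_simps)
      ultimately show ?thesis by simp
    qed
    obtain c where "\<And>s. s \<in> UNIV \<Longrightarrow> \<Psi> s = c"
      using has_vector_derivative_zero_constant[OF convex_UNIV dP] by blast
    then have "\<Psi> t = \<Psi> 0" by simp
    then have "expc (-D) t (w t) = nil_bracket B x y"
      unfolding \<Psi>_def w_def by (simp add: expc_0)
    then have "expc D t (expc D (-t) (w t)) = expc D t (nil_bracket B x y)"
      by (simp add: expc_neg)
    then show ?thesis unfolding w_def by (simp add: expc_inv_apply)
  qed
  show ?thesis unfolding Aut_def using bij br by blast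
qed

lemma Der0_in_lie_alg:
  fixes B :: "'v::euclidean_space \<Rightarrow> 'v \<Rightarrow> 'z::euclidean_space"
  assumes "bilinear B" and D: "D \<in> Der0 B"
  shows "expc D t \<in> Aut0 B"
proof -
  have "expc D t \<in> Aut B" using Der_in_lie_alg[OF assms(1)] D unfolding Der0_def by blast
  moreover have "expc D t (0, a) = (0, a)" for a
  proof -
    have Da: "D (0, a) = 0" using D unfolding Der0_def by blast
    have "((\<lambda>s. expc D s (0, a)) has_vector_derivative 0) (at s within UNIV)" for s
    proof -
      have "((\<lambda>s. expc D s (0, a)) has_vector_derivative (expc D s o\<^sub>L D) (0, a)) (at s)"
        by (rule apply_vd[OF expc_deriv])
      then show ?thesis using Da by simp
    qed
    then obtain c where "\<And>s. s \<in> UNIV \<Longrightarrow> expc D s (0, a) = c"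
      using has_vector_derivative_zero_constant[OF convex_UNIV] by blast
    then have "expc D t (0, a) = expc D 0 (0, a)" by simp
    then show ?thesis by (simp add: expc_0)
  qed
  ultimately show ?thesis unfolding Aut0_def by blast
qed

lemma lie_alg_Aut_eq:
  fixes B :: "'v::euclidean_space \<Rightarrow> 'v \<Rightarrow> 'z::euclidean_space"
  assumes "bilinear B"
  shows "lie_alg (Aut B) = Der B" and "lie_alg (Aut0 B) = Der0 B"
proof -
  show "lie_alg (Aut B) = Der B"
  proof
    show "Der B \<subseteq> lie_alg (Aut B)"
    proof
      fix D assume "D \<in> Der B"
      then show "D \<in> lie_alg (Aut B)" unfolding lie_alg_def
        using Der_in_lie_alg[OF assms] expc_0 expc_deriv0 by blast
    qed
  qed (rule lie_alg_Aut_sub[OF assms])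
  show "lie_alg (Aut0 B) = Der0 B"
  proof
    show "Der0 B \<subseteq> lie_alg (Aut0 B)"
    proof
      fix D assume "D \<in> Der0 B"
      then show "D \<in> lie_alg (Aut0 B)" unfolding lie_alg_def
        using Der0_in_lie_alg[OF assms] expc_0 expc_deriv0 by blast
    qed
  qed (rule lie_alg_Aut0_sub[OF assms])
qed

definition Emat :: "'b::euclidean_space \<Rightarrow> 'a::euclidean_space \<Rightarrow> 'a \<Rightarrow>\<^sub>L 'b" where
  "Emat i j = Blinfun (\<lambda>x. (x \<bullet> j) *\<^sub>R i)"

lemma Emat_apply[simp]: "blinfun_apply (Emat i j) x = (x \<bullet> j) *\<^sub>R i"
  unfolding Emat_def
  by (subst bounded_linear_Blinfun_apply) (auto intro!: bounded_linear_intros)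

lemma blinfun_expand:
  fixes f :: "'a::euclidean_space \<Rightarrow>\<^sub>L 'b::euclidean_space"
  shows "f = (\<Sum>i\<in>Basis. \<Sum>j\<in>Basis. (f j \<bullet> i) *\<^sub>R Emat i j)"
proof (rule blinfun_eqI)
  fix x
  have "blinfun_apply f x = blinfun_of_matrix (\<lambda>i j. f j \<bullet> i) x"
    by (simp add: blinfun_of_matrix_works)
  also have "\<dots> = (\<Sum>i\<in>Basis. \<Sum>j\<in>Basis. ((x \<bullet> j) * (f j \<bullet> i)) *\<^sub>R i)"
    by (rule blinfun_of_matrix_apply)
  also have "\<dots> = blinfun_apply (\<Sum>i\<in>Basis. \<Sum>j\<in>Basis. (f j \<bullet> i) *\<^sub>R Emat i j) x"
    by (simp add: blinfun.sum_left blinfun.scaleR_left mult.commute)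
  finally show "blinfun_apply f x = blinfun_apply (\<Sum>i\<in>Basis. \<Sum>j\<in>Basis. (f j \<bullet> i) *\<^sub>R Emat i j) x" .
qed

lemma blinfun_in_span:
  fixes f :: "'a::euclidean_space \<Rightarrow>\<^sub>L 'b::euclidean_space"
  shows "f \<in> span ((\<lambda>(i, j). Emat i j) ` (Basis \<times> Basis))"
  apply (subst blinfun_expand)
  apply (intro span_sum span_mul span_base)
  apply force
  done

lemma blinfun_indep_finite:
  fixes S :: "('a::euclidean_space \<Rightarrow>\<^sub>L 'b::euclidean_space) set"
  assumes "independent S"
  shows "finite S"
  using independent_span_bound[of "(\<lambda>(i, j). Emat i j) ` (Basis \<times> Basis)" S] assms blinfun_in_span
  by auto

lemma rank_nullity:
  fixes f :: "'a::real_vector \<Rightarrow> 'b::real_vector"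
  assumes finA: "\<And>T::'a set. independent T \<Longrightarrow> finite T"
    and finB: "\<And>T::'b set. independent T \<Longrightarrow> finite T"
    and S: "subspace S" and lf: "linear f"
  shows "dim S = dim {x\<in>S. f x = 0} + dim (f ` S)"
proof -
  define K where "K = {x\<in>S. f x = 0}"
  obtain BK where BK: "BK \<subseteq> K" "independent BK" "K \<subseteq> span BK" "card BK = dim K"
    using basis_exists by blast
  obtain BF where BF: "BF \<subseteq> f ` S" "independent BF" "f ` S \<subseteq> span BF" "card BF = dim (f ` S)"
    using basis_exists by blast
  have fBK: "finite BK" using finA BK(2) by blast
  have fBF: "finite BF" using finB BF(2) by blast
  have le1: "dim S \<le> dim K + dim (f ` S)"
  proof -
    have "\<forall>y\<in>BF. \<exists>x\<in>S. f x = y" using BF(1) by blast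
    then obtain g where g: "\<And>y. y \<in> BF \<Longrightarrow> g y \<in> S \<and> f (g y) = y" by metis
    define P where "P = g ` BF"
    have PS: "P \<subseteq> S" using g unfolding P_def by blast
    have fP: "f ` P = BF" unfolding P_def using g by (force simp: image_image)
    have "S \<subseteq> span (BK \<union> P)"
    proof
      fix x assume x: "x \<in> S"
      then have "f x \<in> span BF" using BF(3) by blast
      also have "span BF = f ` span P" unfolding fP[symmetric] by (rule span_linear_image[OF lf])
      finally obtain p where p: "p \<in> span P" "f x = f p" by blast
      have "p \<in> S" using p(1) PS S by (meson span_minimal subsetD)
      then have "x - p \<in> K" unfolding K_def using x S p(2) lf
        by (simp add: subspace_diff linear_diff)
      then have "x - p \<in> span (BK \<union> P)" using BK(3) span_mono[of BK "BK \<union> P"] by blast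
      moreover have "p \<in> span (BK \<union> P)" using p(1) span_mono[of P "BK \<union> P"] by blast
      ultimately have "(x - p) + p \<in> span (BK \<union> P)" by (rule span_add)
      then show "x \<in> span (BK \<union> P)" by simp
    qed
    then have "dim S \<le> card (BK \<union> P)" using fBK fBF P_def by (intro dim_le_card) auto
    also have "\<dots> \<le> card BK + card P" by (rule card_Un_le)
    also have "card P \<le> card BF" unfolding P_def using fBF by (rule card_image_le)
    finally show ?thesis using BK(4) BF(4) by linarith
  qed
  have le2: "dim K + dim (f ` S) \<le> dim S"
  proof -
    have "BK \<subseteq> S" using BK(1) unfolding K_def by blast
    then obtain C where C: "BK \<subseteq> C" "C \<subseteq> S" "independent C" "S \<subseteq> span C"
      using maximal_independent_subset_extend[of BK S] BK(2) by blast
    have fC: "finite C" using finA C(3) by blast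
    have cC: "card C = dim S" using basis_card_eq_dim[OF C(2) C(4) C(3)] .
    have "f ` S \<subseteq> span (f ` (C - BK))"
    proof -
      have "f ` S \<subseteq> f ` span C" using C(4) by blast
      also have "\<dots> = span (f ` C)" by (rule span_linear_image[OF lf, symmetric])
      also have "\<dots> \<subseteq> span (f ` (C - BK))"
      proof (rule span_minimal)
        show "f ` C \<subseteq> span (f ` (C - BK))"
        proof
          fix y assume "y \<in> f ` C"
          then obtain c where c: "c \<in> C" "y = f c" by blast
          show "y \<in> span (f ` (C - BK))"
          proof (cases "c \<in> BK")
            case True
            then have "y = 0" using c BK(1) unfolding K_def by blast
            then show ?thesis by (simp add: span_zero)
          next
            case False
            then show ?thesis using c by (simp add: span_base)
          qed
        qed
      qed (rule subspace_span)
      finally show ?thesis .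
    qed
    then have "dim (f ` S) \<le> card (f ` (C - BK))" using fC by (intro dim_le_card) auto
    also have "\<dots> \<le> card (C - BK)" using fC by (intro card_image_le) auto
    also have "\<dots> = card C - card BK" using fC C(1) by (intro card_Diff_subset) (auto intro: finite_subset)
    finally show ?thesis using cC BK(4) card_mono[OF fC C(1)] by linarith
  qed
  show ?thesis using le1 le2 unfolding K_def by linarith
qed

definition fatv :: "('v::euclidean_space \<Rightarrow> 'v \<Rightarrow> 'z::euclidean_space) \<Rightarrow> bool" where
  "fatv B \<longleftrightarrow> (\<forall>l u. l \<noteq> 0 \<longrightarrow> (\<forall>w. l \<bullet> B u w = 0) \<longrightarrow> u = 0)"

lemma fat_fatv:
  fixes B :: "'v::euclidean_space \<Rightarrow> 'v \<Rightarrow> 'z::euclidean_space"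
  assumes "fat B" shows "fatv B"
  unfolding fatv_def
proof (intro allI impI)
  fix l :: 'z and u assume l: "l \<noteq> 0" and h: "\<forall>w. l \<bullet> B u w = 0"
  have "linear (\<lambda>x. l \<bullet> x)" by (rule bounded_linear.linear[OF bounded_linear_inner_right])
  moreover have "l \<bullet> l \<noteq> 0" using l by simp
  ultimately show "u = 0" using assms h unfolding fat_def by blast
qed

lemma ex_nonzero_vec: "\<exists>u::'a::euclidean_space. u \<noteq> 0"
proof -
  obtain b :: 'a where "b \<in> Basis" using nonempty_Basis by blast
  then show ?thesis using nonzero_Basis by blast
qed

lemma range_span:
  fixes B :: "'v::euclidean_space \<Rightarrow> 'v \<Rightarrow> 'z::euclidean_space"
  assumes "fatv B"
  shows "span {B u w | u w. True} = UNIV"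
proof (rule ccontr)
  assume "span {B u w | u w. True} \<noteq> UNIV"
  then have "dim {B u w | u w. True} \<noteq> DIM('z)" using dim_eq_full by auto
  then have "dim {B u w | u w. True} < DIM('z)" using dim_subset_UNIV[of "{B u w | u w. True}"] by simp
  then obtain l where l: "l \<noteq> 0" "\<And>y. y \<in> span {B u w | u w. True} \<Longrightarrow> orthogonal l y"
    using orthogonal_to_subspace_exists by blast
  have "\<forall>w. l \<bullet> B u w = 0" for u using l(2)[of "B u _"] span_base[of _ "{B u w | u w. True}"]
    unfolding orthogonal_def by blast
  then have "\<forall>u::'v. u = 0" using assms l(1) unfolding fatv_def by blast
  then show False using ex_nonzero_vec by blast
qed

lemma Der_apply:
  assumes "D \<in> Der B"
  shows "blinfun_apply D (nil_bracket B x y) = nil_bracket B (blinfun_apply D x) y + nil_bracket B x (blinfun_apply D y)"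
  using assms unfolding Der_def by blast

lemma Der_pair:
  assumes "D \<in> Der B"
  shows "blinfun_apply D (0, B u w) = (0, B (fst (D (u, 0))) w + B u (fst (D (w, 0))))"
  using Der_apply[OF assms, of "(u,0)" "(w,0)"] by (simp add: nil_bracket_def)

lemma Der_fst0:
  fixes B :: "'v::euclidean_space \<Rightarrow> 'v \<Rightarrow> 'z::euclidean_space"
  assumes "fatv B" "D \<in> Der B"
  shows "fst (blinfun_apply D (0, q)) = 0"
proof -
  have lin: "linear (\<lambda>q. fst (blinfun_apply D (0::'v, q)))"
    by (intro bounded_linear.linear bounded_linear_fst_comp bounded_linear_compose[OF blinfun.bounded_linear_right]
        bounded_linear_Pair bounded_linear_zero bounded_linear_ident)
  have sub: "subspace {q. fst (blinfun_apply D (0::'v, q)) = 0}"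
    using linear_subspace_kernel[OF lin] .
  have "{B u w | u w. True} \<subseteq> {q. fst (blinfun_apply D (0::'v, q)) = 0}"
    using Der_pair[OF assms(2)] by auto
  then have "span {B u w | u w. True} \<subseteq> {q. fst (blinfun_apply D (0::'v, q)) = 0}"
    using span_minimal sub by blast
  then show ?thesis using range_span[OF assms(1)] by auto
qed

definition Rz :: "(('v::euclidean_space \<times> 'z::euclidean_space) \<Rightarrow>\<^sub>L ('v \<times> 'z)) \<Rightarrow> ('z \<Rightarrow>\<^sub>L 'z)" where
  "Rz D = Blinfun (\<lambda>q. snd (blinfun_apply D (0, q)))"

lemma Rz_apply[simp]: "blinfun_apply (Rz D) q = snd (blinfun_apply D (0, q))"
  unfolding Rz_def
  by (subst bounded_linear_Blinfun_apply)
     (auto intro!: bounded_linear_snd_comp bounded_linear_compose[OF blinfun.bounded_linear_right]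
        bounded_linear_Pair bounded_linear_zero bounded_linear_ident)

lemma linear_Rz: "linear Rz"
  by (rule linearI) (auto intro!: blinfun_eqI simp: blinfun.bilinear_simps)

lemma subspace_Der:
  fixes B :: "'v::euclidean_space \<Rightarrow> 'v \<Rightarrow> 'z::euclidean_space"
  assumes "bilinear B"
  shows "subspace (Der B)"
proof -
  interpret nb: bounded_bilinear "nil_bracket B" by (rule bb_nil_bracket[OF assms])
  show ?thesis
    unfolding subspace_def Der_def
    by (auto simp: blinfun.bilinear_simps nb.bilinear_simps algebra_simps)
qed

lemma Der0_eq:
  fixes B :: "'v::euclidean_space \<Rightarrow> 'v \<Rightarrow> 'z::euclidean_space"
  assumes "fatv B"
  shows "Der0 B = {D \<in> Der B. Rz D = 0}"
proof -
  have "(\<forall>a. blinfun_apply D (0, a) = 0) \<longleftrightarrow> Rz D = 0" if "D \<in> Der B" for D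
  proof
    assume "\<forall>a. blinfun_apply D (0, a) = 0" then show "Rz D = 0" by (intro blinfun_eqI) simp
  next
    assume "Rz D = 0"
    then have "snd (blinfun_apply D (0, a)) = 0" for a by (metis Rz_apply blinfun.zero_left)
    then show "\<forall>a. blinfun_apply D (0, a) = 0" using Der_fst0[OF assms that] by (simp add: prod_eq_iff)
  qed
  then show ?thesis unfolding Der0_def by blast
qed

lemma dim_quot_eq:
  fixes B :: "'v::euclidean_space \<Rightarrow> 'v \<Rightarrow> 'z::euclidean_space"
  assumes "bilinear B" "fatv B"
  shows "dim_Aut_quot B = real (dim (Rz ` Der B))"
proof -
  have "dim (Der B) = dim {D \<in> Der B. Rz D = 0} + dim (Rz ` Der B)"
    by (rule rank_nullity[OF blinfun_indep_finite blinfun_indep_finite subspace_Der[OF assms(1)] linear_Rz])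
  then show ?thesis
    unfolding dim_Aut_quot_def lie_alg_Aut_eq[OF assms(1)] Der0_eq[OF assms(2)] by simp
qed

lemma Rz_Der:
  fixes B :: "'v::euclidean_space \<Rightarrow> 'v \<Rightarrow> 'z::euclidean_space"
  assumes "D \<in> Der B"
  shows "linear (\<lambda>u. fst (blinfun_apply D (u, 0::'z)))"
    and "Rz D (B u w) = B (fst (D (u, 0))) w + B u (fst (D (w, 0)))"
proof -
  show "linear (\<lambda>u. fst (blinfun_apply D (u, 0::'z)))"
    by (intro bounded_linear.linear bounded_linear_fst_comp bounded_linear_compose[OF blinfun.bounded_linear_right]
        bounded_linear_Pair bounded_linear_zero bounded_linear_ident)
  show "Rz D (B u w) = B (fst (D (u, 0))) w + B u (fst (D (w, 0)))"
    using Der_pair[OF assms] by simp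
qed

definition tr :: "('a::euclidean_space \<Rightarrow> 'a) \<Rightarrow> real" where
  "tr f = (\<Sum>b\<in>Basis. f b \<bullet> b)"

lemma tr_comm:
  fixes f g :: "'a::euclidean_space \<Rightarrow> 'a"
  assumes "linear f" "linear g"
  shows "tr (f \<circ> g) = tr (g \<circ> f)"
proof -
  have e1: "f (g b) = (\<Sum>c\<in>Basis. (g b \<bullet> c) *\<^sub>R f c)" for b
  proof -
    have "f (g b) = f (\<Sum>c\<in>Basis. (g b \<bullet> c) *\<^sub>R c)" by (simp add: euclidean_representation)
    also have "\<dots> = (\<Sum>c\<in>Basis. (g b \<bullet> c) *\<^sub>R f c)"
      using assms(1) by (simp add: linear_sum linear_scale)
    finally show ?thesis .
  qed
  have e2: "g (f c) = (\<Sum>b\<in>Basis. (f c \<bullet> b) *\<^sub>R g b)" for c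
  proof -
    have "g (f c) = g (\<Sum>b\<in>Basis. (f c \<bullet> b) *\<^sub>R b)" by (simp add: euclidean_representation)
    also have "\<dots> = (\<Sum>b\<in>Basis. (f c \<bullet> b) *\<^sub>R g b)"
      using assms(2) by (simp add: linear_sum linear_scale)
    finally show ?thesis .
  qed
  have "tr (f \<circ> g) = (\<Sum>b\<in>Basis. \<Sum>c\<in>Basis. (g b \<bullet> c) * (f c \<bullet> b))"
    unfolding tr_def by (simp add: e1 inner_sum_left)
  also have "\<dots> = (\<Sum>c\<in>Basis. \<Sum>b\<in>Basis. (f c \<bullet> b) * (g b \<bullet> c))"
    by (subst sum.swap) (simp add: mult.commute)
  also have "\<dots> = tr (g \<circ> f)"
    unfolding tr_def by (simp add: e2 inner_sum_left)
  finally show ?thesis .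
qed

lemma tr_adj:
  fixes f :: "'a::euclidean_space \<Rightarrow> 'a"
  assumes "linear f"
  shows "tr (adjoint f) = tr f"
  unfolding tr_def using adjoint_clauses(2)[OF assms] by (simp add: inner_commute)

lemma tr_add: "tr (\<lambda>x. f x + g x) = tr f + tr g"
  unfolding tr_def by (simp add: inner_add_left sum.distrib)

lemma tr_scal: "tr (\<lambda>x. c *\<^sub>R (x::'a::euclidean_space)) = c * DIM('a)"
  unfolding tr_def by simp

lemma inner_eqI: "(\<And>w. (x::'a::real_inner) \<bullet> w = y \<bullet> w) \<Longrightarrow> x = y"
  using vector_eq_rdot by blast

lemma eig_trace:
  fixes B :: "'v::euclidean_space \<Rightarrow> 'v \<Rightarrow> 'z::euclidean_space"
    and A :: "'z \<Rightarrow> 'z" and a :: "'v \<Rightarrow> 'v"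
  assumes bl: "bilinear B" and fv: "fatv B" and la: "linear a"
    and der: "\<And>u w. A (B u w) = B (a u) w + B u (a w)"
    and sym: "\<And>x y. A x \<bullet> y = x \<bullet> A y"
    and l: "l \<noteq> 0" and eig: "A l = \<nu> *\<^sub>R l"
  shows "\<nu> * DIM('v) = 2 * tr a"
proof -
  define \<omega> where "\<omega> u w = l \<bullet> B u w" for u w
  have lB1: "linear (\<lambda>w. B u w)" for u using bl unfolding bilinear_def by blast
  have lB2: "linear (\<lambda>u. B u w)" for w using bl unfolding bilinear_def by blast
  have om: "\<nu> * \<omega> u w = \<omega> (a u) w + \<omega> u (a w)" for u w
  proof -
    have "\<nu> * \<omega> u w = A l \<bullet> B u w" unfolding \<omega>_def eig by simp
    also have "\<dots> = l \<bullet> A (B u w)" by (rule sym)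
    also have "\<dots> = \<omega> (a u) w + \<omega> u (a w)" unfolding \<omega>_def der by (simp add: inner_add_right)
    finally show ?thesis .
  qed
  define W where "W u = (\<Sum>b\<in>Basis. \<omega> u b *\<^sub>R b)" for u
  have Wi: "W u \<bullet> w = \<omega> u w" for u w
  proof -
    have "\<omega> u w = \<omega> u (\<Sum>b\<in>Basis. (w \<bullet> b) *\<^sub>R b)" by (simp add: euclidean_representation)
    also have "\<dots> = (\<Sum>b\<in>Basis. (w \<bullet> b) * \<omega> u b)"
      unfolding \<omega>_def using lB1[of u] by (simp add: linear_sum linear_scale inner_sum_right)
    also have "\<dots> = W u \<bullet> w" unfolding W_def by (simp add: inner_sum_left inner_commute[of w] mult.commute)
    finally show ?thesis by simp
  qed
  have lW: "linear W"
  proof (rule linearI)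
    fix x y show "W (x + y) = W x + W y"
      by (rule inner_eqI) (simp add: Wi inner_add_left \<omega>_def linear_add[OF lB2] inner_add_right)
  next
    fix c x show "W (c *\<^sub>R x) = c *\<^sub>R W x"
      by (rule inner_eqI) (simp add: Wi \<omega>_def linear_scale[OF lB2])
  qed
  have iW: "inj W"
  proof (rule linear_inj_on_iff_eq_0[THEN iffD2, OF lW, of UNIV, unfolded inj_on_def[symmetric], simplified], intro allI impI)
    fix u assume "W u = 0"
    then have "\<forall>w. l \<bullet> B u w = 0" using Wi unfolding \<omega>_def by (metis inner_zero_left)
    then show "u = 0" using fv l unfolding fatv_def by blast
  qed
  have sW: "surj W" using linear_injective_imp_surjective[OF lW iW] by simp
  obtain g where lg: "linear g" and gW: "g \<circ> W = id" using linear_injective_left_inverse[OF lW iW] by blast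
  have gW': "g (W u) = u" for u using gW by (metis comp_apply id_apply)
  have Wg: "W (g x) = x" for x
  proof -
    obtain y where "x = W y" using sW by blast
    then show ?thesis by (simp add: gW')
  qed
  have key: "\<nu> *\<^sub>R W u = W (a u) + adjoint a (W u)" for u
    by (rule inner_eqI) (simp add: inner_add_left Wi adjoint_clauses(2)[OF la] om[symmetric])
  have key2: "\<nu> *\<^sub>R u = a u + g (adjoint a (W u))" for u
  proof -
    have "g (\<nu> *\<^sub>R W u) = g (W (a u)) + g (adjoint a (W u))" unfolding key by (simp add: linear_add[OF lg])
    then show ?thesis by (simp add: linear_scale[OF lg] gW')
  qed
  have la': "linear (adjoint a)" by (rule adjoint_linear[OF la])
  have fe: "(\<lambda>u. \<nu> *\<^sub>R u) = (\<lambda>u. a u + (g \<circ> (adjoint a \<circ> W)) u)"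
    using key2 by (simp add: fun_eq_iff)
  have "tr (\<lambda>u::'v. \<nu> *\<^sub>R u) = tr a + tr (g \<circ> (adjoint a \<circ> W))"
    by (subst fe, rule tr_add)
  also have "tr (g \<circ> (adjoint a \<circ> W)) = tr ((adjoint a \<circ> W) \<circ> g)"
    by (rule tr_comm[OF lg linear_compose[OF lW la']])
  also have "(adjoint a \<circ> W) \<circ> g = adjoint a" by (simp add: fun_eq_iff Wg)
  also have "tr (adjoint a) = tr a" by (rule tr_adj[OF la])
  finally show ?thesis unfolding tr_scal by simp
qed

lemma quad_nonneg_zero:
  fixes c d :: real
  assumes "d \<ge> 0" "\<And>t. 2 * t * c + t\<^sup>2 * d \<ge> 0"
  shows "c = 0"
proof (cases "d = 0")
  case True
  then show ?thesis using assms(2)[of "-1"] assms(2)[of 1] by simp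
next
  case False
  then have dp: "d > 0" using assms(1) by simp
  have "2 * (-c/d) * c + (-c/d)\<^sup>2 * d = - (c\<^sup>2 / d)"
    using dp by (simp add: power2_eq_square field_simps)
  then have "- (c\<^sup>2 / d) \<ge> 0" using assms(2)[of "-c/d"] by simp
  then have "c\<^sup>2 / d \<le> 0" by simp
  moreover have "c\<^sup>2 / d \<ge> 0" using dp by simp
  ultimately have "c\<^sup>2 / d = 0" by simp
  then show ?thesis using dp by simp
qed

lemma quad_aux:
  fixes P Q \<mu> t k m j n :: real
  assumes "P \<le> \<mu> * Q" "P = \<mu> + 2 * t * k + t\<^sup>2 * m" "Q = 1 + 2 * t * j + t\<^sup>2 * n" "n = \<mu> * j - k"
  shows "2 * t * n + t\<^sup>2 * (\<mu> * n - m) \<ge> 0"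
proof -
  have "2 * t * n + t\<^sup>2 * (\<mu> * n - m) = \<mu> * Q - P"
    unfolding assms(2,3,4) by (simp add: algebra_simps power2_eq_square)
  then show ?thesis using assms(1) by simp
qed

lemma sym_max_eig:
  fixes A :: "'a::euclidean_space \<Rightarrow> 'a"
  assumes lA: "linear A" and sym: "\<And>x y. A x \<bullet> y = x \<bullet> A y"
  shows "\<exists>x. x \<noteq> 0 \<and> A x = (x \<bullet> A x) *\<^sub>R x \<and> (\<forall>y. y \<bullet> A y \<le> (x \<bullet> A x) * (y \<bullet> y))"
proof -
  let ?S = "sphere (0::'a) 1"
  obtain b :: 'a where b: "b \<in> Basis" using nonempty_Basis by blast
  then have "b \<in> ?S" by simp
  then have ne: "?S \<noteq> {}" by blast
  have bA: "bounded_linear A" using lA linear_conv_bounded_linear by blast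
  have cont: "continuous_on ?S (\<lambda>x. x \<bullet> A x)"
    by (intro continuous_intros linear_continuous_on[OF bA])
  obtain x where xS: "x \<in> ?S" and xmax: "\<And>y. y \<in> ?S \<Longrightarrow> y \<bullet> A y \<le> x \<bullet> A x"
    using continuous_attains_sup[OF compact_sphere ne cont] by blast
  have nx: "norm x = 1" using xS by simp
  then have xx: "x \<bullet> x = 1" by (simp add: norm_eq_1)
  define \<mu> where "\<mu> = x \<bullet> A x"
  have bound: "y \<bullet> A y \<le> \<mu> * (y \<bullet> y)" for y
  proof (cases "y = 0")
    case True then show ?thesis by (simp add: linear_0[OF lA])
  next
    case False
    define s where "s = norm y"
    have sp: "s > 0" using False s_def by simp
    have "(y /\<^sub>R s) \<in> ?S" using sp s_def by simp
    then have "(y /\<^sub>R s) \<bullet> A (y /\<^sub>R s) \<le> \<mu>" using xmax \<mu>_def by blast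
    then have "(y \<bullet> A y) / s\<^sup>2 \<le> \<mu>" using sp by (simp add: linear_scale[OF lA] power2_eq_square divide_inverse mult.commute mult.left_commute)
    then have "y \<bullet> A y \<le> \<mu> * s\<^sup>2" using sp by (simp add: field_simps)
    then show ?thesis by (simp add: s_def power2_norm_eq_inner)
  qed
  define z where "z = \<mu> *\<^sub>R x - A x"
  have symz: "x \<bullet> A z = z \<bullet> A x" using sym[of z x] by (simp add: inner_commute)
  have "2 * t * (z \<bullet> z) + t\<^sup>2 * (\<mu> * (z \<bullet> z) - z \<bullet> A z) \<ge> 0" for t
  proof -
    have "(x + t *\<^sub>R z) \<bullet> A (x + t *\<^sub>R z) \<le> \<mu> * ((x + t *\<^sub>R z) \<bullet> (x + t *\<^sub>R z))" by (rule bound)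
    moreover have "(x + t *\<^sub>R z) \<bullet> A (x + t *\<^sub>R z) = \<mu> + 2 * t * (z \<bullet> A x) + t\<^sup>2 * (z \<bullet> A z)"
      using symz by (simp add: linear_add[OF lA] linear_scale[OF lA] inner_add_left inner_add_right \<mu>_def power2_eq_square algebra_simps)
    moreover have "(x + t *\<^sub>R z) \<bullet> (x + t *\<^sub>R z) = 1 + 2 * t * (x \<bullet> z) + t\<^sup>2 * (z \<bullet> z)"
      using xx by (simp add: inner_add_left inner_add_right inner_commute power2_eq_square algebra_simps)
    moreover have "z \<bullet> z = \<mu> * (x \<bullet> z) - z \<bullet> A x"
    proof -
      have "z \<bullet> z = z \<bullet> (\<mu> *\<^sub>R x - A x)" unfolding z_def[symmetric] ..
      then show ?thesis by (simp add: inner_diff_right inner_commute)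
    qed
    ultimately show ?thesis by (rule quad_aux)
  qed
  moreover have "\<mu> * (z \<bullet> z) - z \<bullet> A z \<ge> 0" using bound[of z] by simp
  ultimately have "z \<bullet> z = 0" using quad_nonneg_zero by blast
  then have "A x = \<mu> *\<^sub>R x" unfolding z_def by simp
  moreover have "x \<noteq> 0" using nx by auto
  ultimately show ?thesis using bound \<mu>_def by blast
qed

lemma sym_scalar:
  fixes A :: "'a::euclidean_space \<Rightarrow> 'a"
  assumes lA: "linear A" and sym: "\<And>x y. A x \<bullet> y = x \<bullet> A y"
    and eigs: "\<And>l \<nu>. l \<noteq> 0 \<Longrightarrow> A l = \<nu> *\<^sub>R l \<Longrightarrow> \<nu> = c"
  shows "A x = c *\<^sub>R x"
proof -
  obtain x1 where x1: "x1 \<noteq> 0" "A x1 = (x1 \<bullet> A x1) *\<^sub>R x1" "\<forall>y. y \<bullet> A y \<le> (x1 \<bullet> A x1) * (y \<bullet> y)"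
    using sym_max_eig[OF lA sym] by blast
  have lA': "linear (\<lambda>x. - A x)" using lA by (simp add: linear_compose_neg)
  obtain x2 where x2: "x2 \<noteq> 0" "- A x2 = (x2 \<bullet> - A x2) *\<^sub>R x2" "\<forall>y. y \<bullet> - A y \<le> (x2 \<bullet> - A x2) * (y \<bullet> y)"
    using sym_max_eig[OF lA', of] sym by fastforce
  have e1: "x1 \<bullet> A x1 = c" using eigs[OF x1(1) x1(2)] .
  have "A x2 = (x2 \<bullet> A x2) *\<^sub>R x2" using x2(2) by (simp add: minus_equation_iff[of "A x2"])
  then have e2: "x2 \<bullet> A x2 = c" using eigs[OF x2(1)] by blast
  have q: "y \<bullet> A y = c * (y \<bullet> y)" for y
    using x1(3)[rule_format, of y] x2(3)[rule_format, of y] e1 e2 by simp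
  define S where "S y = A y - c *\<^sub>R y" for y
  have lS: "linear S" unfolding S_def by (rule linearI) (simp_all add: linear_add[OF lA] linear_scale[OF lA] algebra_simps)
  have qS: "y \<bullet> S y = 0" for y unfolding S_def using q by (simp add: inner_diff_right)
  have symS: "S x \<bullet> y = x \<bullet> S y" for x y unfolding S_def using sym by (simp add: inner_diff_left inner_diff_right inner_commute)
  have "S x \<bullet> S x = 0"
  proof -
    have "(x + S x) \<bullet> S (x + S x) = 0" by (rule qS)
    then have "x \<bullet> S (S x) + S x \<bullet> S x = 0"
      using qS[of x] qS[of "S x"] by (simp add: linear_add[OF lS] inner_add_left inner_add_right)
    moreover have "x \<bullet> S (S x) = S x \<bullet> S x" using symS[of x "S x"] by simp
    ultimately show ?thesis by simp
  qed
  then show ?thesis unfolding S_def by simp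
qed

lemma Lset_sym_scalar:
  fixes B :: "'v::euclidean_space \<Rightarrow> 'v \<Rightarrow> 'z::euclidean_space"
    and A :: "'z \<Rightarrow> 'z" and a :: "'v \<Rightarrow> 'v"
  assumes bl: "bilinear B" and fv: "fatv B" and lA: "linear A" and la: "linear a"
    and der: "\<And>u w. A (B u w) = B (a u) w + B u (a w)"
    and sym: "\<And>x y. A x \<bullet> y = x \<bullet> A y"
  shows "A x = (2 * tr a / DIM('v)) *\<^sub>R x"
proof (rule sym_scalar[OF lA sym])
  fix l \<nu> assume "l \<noteq> 0" "A l = \<nu> *\<^sub>R l"
  then have "\<nu> * DIM('v) = 2 * tr a" using eig_trace[OF bl fv la der sym] by blast
  then show "\<nu> = 2 * tr a / DIM('v)" by (simp add: field_simps)
qed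

lemma lin_bl: "linear (blinfun_apply A)"
  by (rule bounded_linear.linear[OF blinfun.bounded_linear_right])

definition adjB :: "('a::euclidean_space \<Rightarrow>\<^sub>L 'a) \<Rightarrow> ('a \<Rightarrow>\<^sub>L 'a)" where
  "adjB A = Blinfun (adjoint (blinfun_apply A))"

lemma adjB_apply: "blinfun_apply (adjB A) = adjoint (blinfun_apply A)"
proof -
  have "linear (blinfun_apply A)" by (rule lin_bl)
  then have "bounded_linear (adjoint (blinfun_apply A))"
    using adjoint_linear linear_conv_bounded_linear by blast
  then show ?thesis unfolding adjB_def by (rule bounded_linear_Blinfun_apply)
qed

lemma adjB_inner: "adjB A x \<bullet> y = x \<bullet> A y"
  unfolding adjB_apply by (rule adjoint_clauses(2)[OF lin_bl])

lemma adjB_inner2: "x \<bullet> adjB A y = A x \<bullet> y"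
  using adjB_inner[of A y x] by (simp add: inner_commute)

lemma linear_adjB: "linear (adjB :: ('a::euclidean_space \<Rightarrow>\<^sub>L 'a) \<Rightarrow> _)"
proof (rule linearI)
  fix A C :: "'a \<Rightarrow>\<^sub>L 'a"
  show "adjB (A + C) = adjB A + adjB C"
    by (rule blinfun_eqI, rule inner_eqI) (simp add: adjB_inner blinfun.bilinear_simps inner_add_left inner_add_right)
next
  fix c and A :: "'a \<Rightarrow>\<^sub>L 'a"
  show "adjB (c *\<^sub>R A) = c *\<^sub>R adjB A"
    by (rule blinfun_eqI, rule inner_eqI) (simp add: adjB_inner blinfun.bilinear_simps)
qed

definition Ek :: "'a::euclidean_space \<Rightarrow> 'a \<Rightarrow> 'a \<Rightarrow>\<^sub>L 'a" where
  "Ek i j = Emat i j - Emat j i"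

lemma skew_span:
  fixes K :: "'a::euclidean_space \<Rightarrow>\<^sub>L 'a"
  assumes sk: "\<And>x y. K x \<bullet> y = - (x \<bullet> K y)"
  shows "K \<in> span {Ek i j | i j. i \<in> Basis \<and> j \<in> Basis}"
proof -
  have c: "K i \<bullet> j = - (K j \<bullet> i)" for i j using sk[of i j] by (simp add: inner_commute)
  have sw: "(\<Sum>i\<in>Basis. \<Sum>j\<in>Basis. (K j \<bullet> i) *\<^sub>R Emat j i) = (\<Sum>i\<in>Basis. \<Sum>j\<in>Basis. (K i \<bullet> j) *\<^sub>R (Emat i j :: 'a \<Rightarrow>\<^sub>L 'a))"
    by (rule sum.swap)
  have "(\<Sum>i\<in>Basis. \<Sum>j\<in>Basis. (K j \<bullet> i) *\<^sub>R Ek i j)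
      = (\<Sum>i\<in>Basis. \<Sum>j\<in>Basis. (K j \<bullet> i) *\<^sub>R Emat i j) - (\<Sum>i\<in>Basis. \<Sum>j\<in>Basis. (K j \<bullet> i) *\<^sub>R Emat j i)"
    unfolding Ek_def by (simp add: scaleR_diff_right sum_subtractf)
  also have "\<dots> = 2 *\<^sub>R (\<Sum>i\<in>Basis. \<Sum>j\<in>Basis. (K j \<bullet> i) *\<^sub>R Emat i j)"
  proof -
    have "(\<Sum>i\<in>Basis. \<Sum>j\<in>Basis. (K i \<bullet> j) *\<^sub>R (Emat i j :: 'a \<Rightarrow>\<^sub>L 'a))
        = (\<Sum>i\<in>Basis. \<Sum>j\<in>Basis. - ((K j \<bullet> i) *\<^sub>R Emat i j))"
      by (intro sum.cong refl) (subst c, simp)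
    then show ?thesis unfolding sw by (simp add: sum_negf scaleR_2)
  qed
  also have "\<dots> = 2 *\<^sub>R K" using blinfun_expand[of K] by simp
  finally have "K = (1/2) *\<^sub>R (\<Sum>i\<in>Basis. \<Sum>j\<in>Basis. (K j \<bullet> i) *\<^sub>R Ek i j)" by simp
  also have "\<dots> \<in> span {Ek i j | i j. i \<in> Basis \<and> j \<in> Basis}"
    by (intro span_mul span_sum span_base) blast
  finally show ?thesis .
qed

lemma card_pairs: "2 * card {(k, l). k < l \<and> l < (m::nat)} = m * (m - 1)"
proof (induction m)
  case 0 then show ?case by simp
next
  case (Suc m)
  have eq: "{(k, l). k < l \<and> l < Suc m} = {(k, l). k < l \<and> l < m} \<union> (\<lambda>k. (k, m)) ` {..<m}"
    by auto
  have fin: "finite {(k, l). k < l \<and> l < (m::nat)}"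
    by (rule finite_subset[of _ "{..<m} \<times> {..<m}"]) auto
  have "card {(k, l). k < l \<and> l < Suc m} = card {(k, l). k < l \<and> l < m} + card ((\<lambda>k. (k, m)) ` {..<m})"
    unfolding eq by (rule card_Un_disjoint[OF fin]) auto
  also have "card ((\<lambda>k. (k, m)) ` {..<m}) = m" by (simp add: card_image inj_on_def)
  finally show ?case using Suc.IH by (cases m) (auto simp: algebra_simps)
qed

lemma skew_dim:
  fixes S :: "('a::euclidean_space \<Rightarrow>\<^sub>L 'a) set"
  assumes sk: "\<And>K x y. K \<in> S \<Longrightarrow> K x \<bullet> y = - (x \<bullet> K y)"
  shows "2 * dim S \<le> DIM('a) * (DIM('a) - 1)"
proof -
  obtain e where e: "bij_betw e {0..<DIM('a)} (Basis :: 'a set)"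
    using ex_bij_betw_nat_finite[of "Basis :: 'a set"] by auto
  define P where "P = {(k, l). k < l \<and> l < DIM('a)}"
  define T where "T = (\<lambda>(k, l). Ek (e k) (e l)) ` P"
  have finP: "finite P" unfolding P_def by (rule finite_subset[of _ "{..<DIM('a)} \<times> {..<DIM('a)}"]) auto
  have "Ek i j \<in> span T" if ii: "i \<in> Basis" and jj: "j \<in> Basis" for i j
  proof -
    obtain k where k: "k < DIM('a)" "e k = i" using e ii unfolding bij_betw_def by force
    obtain l where l: "l < DIM('a)" "e l = j" using e jj unfolding bij_betw_def by force
    consider "k < l" | "l < k" | "k = l" by arith
    then show ?thesis
    proof cases
      case 1 then have "Ek i j \<in> T" unfolding T_def P_def using k l by force
      then show ?thesis by (rule span_base)
    next
      case 2 then have "Ek j i \<in> T" unfolding T_def P_def using k l by force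
      then have "- Ek j i \<in> span T" by (intro span_neg span_base)
      moreover have "- Ek j i = Ek i j" unfolding Ek_def by simp
      ultimately show ?thesis by simp
    next
      case 3 then have "Ek i j = 0" using k l unfolding Ek_def by simp
      then show ?thesis by (simp add: span_zero)
    qed
  qed
  then have "span {Ek i j | i j. i \<in> Basis \<and> j \<in> Basis} \<subseteq> span T"
    by (intro span_minimal subspace_span) blast
  then have "S \<subseteq> span T" using skew_span sk by blast
  then have "dim S \<le> card T" using finP unfolding T_def by (intro dim_le_card) auto
  also have "card T \<le> card P" unfolding T_def using finP by (rule card_image_le)
  finally show ?thesis using card_pairs[of "DIM('a)"] unfolding P_def by linarith
qed

lemma dim_W_upper:
  fixes B :: "'v::euclidean_space \<Rightarrow> 'v \<Rightarrow> 'z::euclidean_space"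
  assumes bl: "bilinear B" and fv: "fatv B"
  shows "2 * dim (Rz ` Der B) \<le> 2 + DIM('z) * (DIM('z) - 1)"
proof -
  define W where "W = Rz ` Der B"
  define \<Phi> where "\<Phi> A = A - adjB A" for A :: "'z \<Rightarrow>\<^sub>L 'z"
  have sW: "subspace W" unfolding W_def by (rule linear_subspace_image[OF linear_Rz subspace_Der[OF bl]])
  have l\<Phi>: "linear \<Phi>" unfolding \<Phi>_def[abs_def] by (intro linear_compose_sub linear_ident linear_adjB)
  have rn: "dim W = dim {A\<in>W. \<Phi> A = 0} + dim (\<Phi> ` W)"
    by (rule rank_nullity[OF blinfun_indep_finite blinfun_indep_finite sW l\<Phi>])
  have k: "{A\<in>W. \<Phi> A = 0} \<subseteq> span {id_blinfun}"
  proof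
    fix A assume "A \<in> {A\<in>W. \<Phi> A = 0}"
    then obtain D where D: "D \<in> Der B" "A = Rz D" and p: "\<Phi> A = 0" unfolding W_def by blast
    have adj: "adjB A = A" using p unfolding \<Phi>_def by simp
    have sym: "A x \<bullet> y = x \<bullet> A y" for x y using adjB_inner[of A x y] adj by simp
    have lA: "linear (blinfun_apply A)" by (rule lin_bl)
    define c where "c = 2 * tr (\<lambda>u. fst (blinfun_apply D (u, 0::'z))) / DIM('v)"
    have "blinfun_apply A x = c *\<^sub>R x" for x
      unfolding c_def
      by (rule Lset_sym_scalar[OF bl fv lA Rz_Der(1)[OF D(1)] _ sym]) (simp add: D(2) Der_pair[OF D(1)])
    then have "A = c *\<^sub>R id_blinfun" by (intro blinfun_eqI) (simp add: blinfun.scaleR_left)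
    then show "A \<in> span {id_blinfun}" by (simp add: span_mul span_base)
  qed
  have d1: "dim {A\<in>W. \<Phi> A = 0} \<le> 1"
  proof -
    have "dim {A\<in>W. \<Phi> A = 0} \<le> card {id_blinfun :: 'z \<Rightarrow>\<^sub>L 'z}"
      by (rule dim_le_card[OF k]) simp
    then show ?thesis by simp
  qed
  have d2: "2 * dim (\<Phi> ` W) \<le> DIM('z) * (DIM('z) - 1)"
  proof (rule skew_dim)
    fix K x y assume "K \<in> \<Phi> ` W"
    then obtain A where "K = A - adjB A" unfolding \<Phi>_def by blast
    then show "K x \<bullet> y = - (x \<bullet> K y)"
      by (simp add: blinfun.bilinear_simps inner_diff_left inner_diff_right adjB_inner adjB_inner2)
  qed
  show ?thesis using rn d1 d2 unfolding W_def by linarith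
qed

lemma indep_card_le_dim:
  fixes B V :: "'a::real_vector set"
  assumes fin: "\<And>T::'a set. independent T \<Longrightarrow> finite T"
    and "B \<subseteq> V" "independent B"
  shows "card B \<le> dim V"
proof -
  obtain C where C: "B \<subseteq> C" "C \<subseteq> V" "independent C" "V \<subseteq> span C"
    using maximal_independent_subset_extend[OF assms(2,3)] by blast
  have "card C = dim V" using basis_card_eq_dim[OF C(2) C(4) C(3)] .
  moreover have "card B \<le> card C" using card_mono[OF fin[OF C(3)] C(1)] .
  ultimately show ?thesis by simp
qed

lemma family_indep:
  fixes f :: "'i \<Rightarrow> 'a::real_vector"
  assumes fP: "finite P" and h: "\<And>c. (\<Sum>p\<in>P. c p *\<^sub>R f p) = 0 \<Longrightarrow> \<forall>p\<in>P. c p = 0"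
  shows "inj_on f P" and "independent (f ` P)"
proof -
  show inj: "inj_on f P"
  proof (rule inj_onI, rule ccontr)
    fix p q assume pq: "p \<in> P" "q \<in> P" "f p = f q" "p \<noteq> q"
    define c where "c r = (if r = p then 1 else if r = q then -1 else (0::real))" for r :: 'i
    have "(\<Sum>r\<in>P. c r *\<^sub>R f r) = (\<Sum>r\<in>P. (if r = p then f p else 0)) - (\<Sum>r\<in>P. (if r = q then f q else 0))"
      unfolding sum_subtractf[symmetric] c_def using pq by (intro sum.cong refl) auto
    also have "\<dots> = 0" using pq fP by simp
    finally have "\<forall>r\<in>P. c r = 0" by (rule h)
    then show False using pq(1) unfolding c_def by auto
  qed
  show "independent (f ` P)"
  proof
    assume "dependent (f ` P)"
    then obtain t u where t: "finite t" "t \<subseteq> f ` P" "(\<Sum>v\<in>t. u v *\<^sub>R v) = 0" and v: "\<exists>v\<in>t. u v \<noteq> 0"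
      unfolding dependent_explicit by blast
    define c where "c p = (if f p \<in> t then u (f p) else 0)" for p
    have "(\<Sum>p\<in>P. c p *\<^sub>R f p) = (\<Sum>v\<in>f ` P. (if v \<in> t then u v else 0) *\<^sub>R v)"
      unfolding c_def by (simp add: sum.reindex[OF inj])
    also have "\<dots> = (\<Sum>v\<in>f ` P. if v \<in> t then u v *\<^sub>R v else 0)"
      by (intro sum.cong refl) simp
    also have "\<dots> = (\<Sum>v\<in>t. u v *\<^sub>R v)"
      using t(2) fP by (simp add: sum.If_cases Int_absorb1)
    also have "\<dots> = 0" by (rule t(3))
    finally have "\<forall>p\<in>P. c p = 0" by (rule h)
    then show False using v t(2) unfolding c_def by force
  qed
qed

lemma bilinear_lin1: "bilinear g \<Longrightarrow> linear (\<lambda>x. g x y)" unfolding bilinear_def by blast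
lemma bilinear_lin2: "bilinear g \<Longrightarrow> linear (\<lambda>y. g x y)" unfolding bilinear_def by blast

lemma Ek_apply: "blinfun_apply (Ek i j) x = (x \<bullet> j) *\<^sub>R i - (x \<bullet> i) *\<^sub>R j"
  unfolding Ek_def by (simp add: blinfun.diff_left)

lemma Ek_family:
  fixes e :: "nat \<Rightarrow> 'a::euclidean_space"
  assumes e: "bij_betw e {0..<DIM('a)} Basis"
    and P: "P = {(k, l). k < l \<and> l < DIM('a)}"
    and s: "(\<Sum>p\<in>P. c p *\<^sub>R Ek (e (fst p)) (e (snd p))) = 0"
  shows "\<forall>p\<in>P. c p = 0"
proof
  fix p0 assume p0: "p0 \<in> P"
  obtain k' l' where p0e: "p0 = (k', l')" "k' < l'" "l' < DIM('a)" using p0 P by auto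
  have eB: "a < DIM('a) \<Longrightarrow> e a \<in> Basis" for a using e unfolding bij_betw_def by auto
  have einj: "a < DIM('a) \<Longrightarrow> b < DIM('a) \<Longrightarrow> e a = e b \<longleftrightarrow> a = b" for a b
    using e unfolding bij_betw_def inj_on_def by auto
  have ee: "a < DIM('a) \<Longrightarrow> b < DIM('a) \<Longrightarrow> e a \<bullet> e b = (if a = b then 1 else 0)" for a b
    using inner_Basis[OF eB eB] einj by simp
  have val: "Ek (e (fst p)) (e (snd p)) (e l') \<bullet> e k' = (if p = p0 then 1 else 0)" if pP: "p \<in> P" for p
  proof -
    obtain k l where pe: "p = (k, l)" "k < l" "l < DIM('a)" using pP P by auto
    show ?thesis using pe p0e by (auto simp: Ek_apply inner_diff_left ee inner_commute)
  qed
  have "0 = (\<Sum>p\<in>P. c p *\<^sub>R Ek (e (fst p)) (e (snd p))) (e l') \<bullet> e k'" using s by simp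
  also have "\<dots> = (\<Sum>p\<in>P. c p * (Ek (e (fst p)) (e (snd p)) (e l') \<bullet> e k'))"
    by (simp add: blinfun.sum_left blinfun.scaleR_left inner_sum_left)
  also have "\<dots> = (\<Sum>p\<in>P. if p = p0 then c p else 0)"
    by (intro sum.cong refl) (simp add: val)
  also have "\<dots> = c p0"
  proof -
    have finP: "finite P" unfolding P by (rule finite_subset[of _ "{..<DIM('a)} \<times> {..<DIM('a)}"]) auto
    show ?thesis using p0 by (simp add: sum.delta[OF finP])
  qed
  finally show "c p0 = 0" by simp
qed

locale hsetup =
  fixes H :: "'v::euclidean_space \<Rightarrow> 'v \<Rightarrow> 'z::euclidean_space"
    and gv :: "'v \<Rightarrow> 'v \<Rightarrow> real" and gz :: "'z \<Rightarrow> 'z \<Rightarrow> real" and J :: "'z \<Rightarrow> 'v \<Rightarrow> 'v"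
  assumes skH: "skew_bilinear H" and ipv: "inner_product_form gv" and ipz: "inner_product_form gz"
    and Jlin: "\<And>z. linear (J z)"
    and Jgv: "\<And>z u w. gv (J z u) w = gz z (H u w)"
    and Jsq: "\<And>z u. J z (J z u) = - (gz z z) *\<^sub>R u"
begin

lemma blH: "bilinear H" using skH unfolding skew_bilinear_def by blast
lemma blv: "bilinear gv" using ipv unfolding inner_product_form_def by blast
lemma blz: "bilinear gz" using ipz unfolding inner_product_form_def by blast
lemma symv: "gv x y = gv y x" using ipv unfolding inner_product_form_def by blast
lemma symz: "gz x y = gz y x" using ipz unfolding inner_product_form_def by blast
lemma posv: "x \<noteq> 0 \<Longrightarrow> gv x x > 0" using ipv unfolding inner_product_form_def by blast
lemma posz: "x \<noteq> 0 \<Longrightarrow> gz x x > 0" using ipz unfolding inner_product_form_def by blast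

lemmas gv1 = linear_add[OF bilinear_lin1[OF blv]] linear_scale[OF bilinear_lin1[OF blv]]
  linear_diff[OF bilinear_lin1[OF blv]] linear_0[OF bilinear_lin1[OF blv]] linear_neg[OF bilinear_lin1[OF blv]]
lemmas gv2 = linear_add[OF bilinear_lin2[OF blv]] linear_scale[OF bilinear_lin2[OF blv]]
  linear_diff[OF bilinear_lin2[OF blv]] linear_0[OF bilinear_lin2[OF blv]] linear_neg[OF bilinear_lin2[OF blv]]
lemmas gz1 = linear_add[OF bilinear_lin1[OF blz]] linear_scale[OF bilinear_lin1[OF blz]]
  linear_diff[OF bilinear_lin1[OF blz]] linear_0[OF bilinear_lin1[OF blz]] linear_neg[OF bilinear_lin1[OF blz]]
lemmas gz2 = linear_add[OF bilinear_lin2[OF blz]] linear_scale[OF bilinear_lin2[OF blz]]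
  linear_diff[OF bilinear_lin2[OF blz]] linear_0[OF bilinear_lin2[OF blz]] linear_neg[OF bilinear_lin2[OF blz]]
lemmas H1 = linear_add[OF bilinear_lin1[OF blH]] linear_scale[OF bilinear_lin1[OF blH]]
  linear_diff[OF bilinear_lin1[OF blH]] linear_0[OF bilinear_lin1[OF blH]] linear_neg[OF bilinear_lin1[OF blH]]
lemmas H2 = linear_add[OF bilinear_lin2[OF blH]] linear_scale[OF bilinear_lin2[OF blH]]
  linear_diff[OF bilinear_lin2[OF blH]] linear_0[OF bilinear_lin2[OF blH]] linear_neg[OF bilinear_lin2[OF blH]]
lemmas Jl = linear_add[OF Jlin] linear_scale[OF Jlin] linear_diff[OF Jlin] linear_0[OF Jlin] linear_neg[OF Jlin]

lemma Hskew: "H u w = - H w u"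
proof -
  have "H (u + w) (u + w) = 0" using skH unfolding skew_bilinear_def by blast
  moreover have "H u u = 0" "H w w = 0" using skH unfolding skew_bilinear_def by blast+
  ultimately show ?thesis by (simp add: H1 H2 add_eq_0_iff)
qed

lemma gv_nondeg: "(\<And>w. gv p w = 0) \<Longrightarrow> p = 0"
  using posv[of p] by force

lemma gz_nondeg: "(\<And>w. gz p w = 0) \<Longrightarrow> p = 0"
  using posz[of p] by force

lemma gv_eqI: "(\<And>w. gv p w = gv q w) \<Longrightarrow> p = q"
  using gv_nondeg[of "p - q"] by (simp add: gv1)

lemma gz_eqI: "(\<And>w. gz w p = gz w q) \<Longrightarrow> p = q"
  using gz_nondeg[of "p - q"] by (simp add: gz1 symz[of "p - q"] symz[of p] symz[of q])

lemma J_add: "J (x + y) u = J x u + J y u"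
  by (rule gv_eqI) (simp add: Jgv gv1 gz1)

lemma J_scale: "J (c *\<^sub>R x) u = c *\<^sub>R J x u"
  by (rule gv_eqI) (simp add: Jgv gv1 gz1)

lemma J_skew: "gv p (J z w) = - gv (J z p) w"
proof -
  have "gv p (J z w) = gv (J z w) p" by (rule symv)
  also have "\<dots> = gz z (H w p)" by (rule Jgv)
  also have "\<dots> = - gz z (H p w)" by (simp add: Hskew[of w p] gz2)
  also have "\<dots> = - gv (J z p) w" by (simp add: Jgv)
  finally show ?thesis .
qed

lemma J_anti: "J x (J y u) + J y (J x u) = - (2 * gz x y) *\<^sub>R u"
proof -
  have "J (x + y) (J (x + y) u) = - gz (x + y) (x + y) *\<^sub>R u" by (rule Jsq)
  moreover have "J (x + y) (J (x + y) u) = J x (J x u) + J x (J y u) + J y (J x u) + J y (J y u)"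
    by (simp add: J_add Jl)
  moreover have "gz (x + y) (x + y) = gz x x + 2 * gz x y + gz y y"
    by (simp add: gz1 gz2 symz[of y x])
  ultimately show ?thesis by (simp add: Jsq algebra_simps)
qed

lemma J_triple: "J z (J x (J y u)) = J x (J y (J z u)) + (2 * gz z y) *\<^sub>R J x u - (2 * gz z x) *\<^sub>R J y u"
proof -
  have a1: "J z (J x v) = - J x (J z v) - (2 * gz z x) *\<^sub>R v" for v
  proof -
    have "J z (J x v) = (J z (J x v) + J x (J z v)) - J x (J z v)" by simp
    also have "\<dots> = - (2 * gz z x) *\<^sub>R v - J x (J z v)" by (simp only: J_anti)
    finally show ?thesis by simp
  qed
  have a2: "J z (J y u) = - J y (J z u) - (2 * gz z y) *\<^sub>R u"
  proof -
    have "J z (J y u) = (J z (J y u) + J y (J z u)) - J y (J z u)" by simp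
    also have "\<dots> = - (2 * gz z y) *\<^sub>R u - J y (J z u)" by (simp only: J_anti)
    finally show ?thesis by simp
  qed
  show ?thesis unfolding a1 a2 by (simp add: Jl algebra_simps)
qed

definition ader :: "'z \<Rightarrow> 'z \<Rightarrow> 'v \<Rightarrow> 'v" where
  "ader x y u = (1/4) *\<^sub>R (J x (J y u) - J y (J x u))"

definition Ader :: "'z \<Rightarrow> 'z \<Rightarrow> 'z \<Rightarrow> 'z" where
  "Ader x y q = gz x q *\<^sub>R y - gz y q *\<^sub>R x"

lemma lin_ader: "linear (ader x y)"
  unfolding ader_def by (rule linearI) (simp_all add: Jl algebra_simps)

lemma lin_Ader: "linear (Ader x y)"
  unfolding Ader_def by (rule linearI) (simp_all add: gz2 algebra_simps)

lemma ader_skew: "gv p (ader x y w) = - gv (ader x y p) w"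
proof -
  have e1: "gv p (J x (J y w)) = gv (J y (J x p)) w" using J_skew[of p x "J y w"] J_skew[of "J x p" y w] by simp
  have e2: "gv p (J y (J x w)) = gv (J x (J y p)) w" using J_skew[of p y "J x w"] J_skew[of "J y p" x w] by simp
  show ?thesis unfolding ader_def by (simp add: gv1 gv2 e1 e2 algebra_simps)
qed

lemma half2: "(c/2) *\<^sub>R v + (c/2) *\<^sub>R v = c *\<^sub>R (v::'a::real_vector)"
  by (simp add: scaleR_left_distrib[symmetric])

lemma comm_ader: "J z (ader x y u) - ader x y (J z u) = gz z y *\<^sub>R J x u - gz z x *\<^sub>R J y u"
proof -
  have "J z (ader x y u) - ader x y (J z u) = (1/4) *\<^sub>R ((J z (J x (J y u)) - J z (J y (J x u))) - (J x (J y (J z u)) - J y (J x (J z u))))"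
    unfolding ader_def by (simp add: Jl algebra_simps)
  also have "\<dots> = gz z y *\<^sub>R J x u - gz z x *\<^sub>R J y u"
    unfolding J_triple[of z x y] J_triple[of z y x] by (simp add: algebra_simps half2)
  finally show ?thesis .
qed

lemma der_H: "H (ader x y u) w + H u (ader x y w) = Ader x y (H u w)"
proof (rule gz_eqI)
  fix z
  have "gz z (H (ader x y u) w + H u (ader x y w)) = gv (J z (ader x y u)) w + gv (J z u) (ader x y w)"
    by (simp add: gz2 Jgv)
  also have "\<dots> = gv (J z (ader x y u) - ader x y (J z u)) w"
    by (simp add: ader_skew gv1)
  also have "\<dots> = gz z y * gz x (H u w) - gz z x * gz y (H u w)"
    unfolding comm_ader by (simp add: gv1 Jgv)
  also have "\<dots> = gz z (Ader x y (H u w))"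
    unfolding Ader_def by (simp add: gz2 symz[of z] mult.commute)
  finally show "gz z (H (ader x y u) w + H u (ader x y w)) = gz z (Ader x y (H u w))" .
qed

definition Gm :: "'z \<Rightarrow> 'z" where "Gm x = (\<Sum>b\<in>Basis. gz x b *\<^sub>R b)"

lemma Gm_inner: "Gm x \<bullet> y = gz x y"
proof -
  have "gz x y = gz x (\<Sum>b\<in>Basis. (y \<bullet> b) *\<^sub>R b)" by (simp add: euclidean_representation)
  also have "\<dots> = (\<Sum>b\<in>Basis. (y \<bullet> b) * gz x b)"
    using bilinear_lin2[OF blz, of x] by (simp add: linear_sum linear_scale)
  also have "\<dots> = Gm x \<bullet> y" unfolding Gm_def by (simp add: inner_sum_left inner_commute[of y] mult.commute)
  finally show ?thesis by simp
qed

lemma lin_Gm: "linear Gm"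
  by (rule linearI; rule inner_eqI) (simp_all add: Gm_inner inner_add_left gz1)

lemma Gm_surj: "surj Gm"
proof -
  have "inj Gm"
  proof (rule linear_inj_on_iff_eq_0[THEN iffD2, OF lin_Gm, of UNIV, unfolded inj_on_def[symmetric], simplified], intro allI impI)
    fix x assume "Gm x = 0"
    then have "gz x x = 0" using Gm_inner[of x x] by simp
    then show "x = 0" using posz[of x] by (cases "x = 0") auto
  qed
  then show ?thesis using linear_injective_imp_surjective[OF lin_Gm] by simp
qed

definition gi :: "'z \<Rightarrow> 'z" where "gi y = (SOME x. Gm x = y)"

lemma Gm_gi: "Gm (gi y) = y"
  unfolding gi_def using Gm_surj by (metis (mono_tags) someI_ex surjD)

lemma gz_gi: "gz (gi y) q = y \<bullet> q"
  using Gm_inner[of "gi y" q] Gm_gi by simp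

lemma fatvH: "fatv H"
  unfolding fatv_def
proof (intro allI impI)
  fix l :: 'z and u assume l: "l \<noteq> 0" and h: "\<forall>w. l \<bullet> H u w = 0"
  define z where "z = gi l"
  have zn: "z \<noteq> 0" using l Gm_gi[of l] linear_0[OF lin_Gm] unfolding z_def by auto
  have "gv (J z u) w = 0" for w using h Jgv gz_gi unfolding z_def by simp
  then have "J z u = 0" using gv_nondeg by blast
  then have "- (gz z z) *\<^sub>R u = 0" using Jsq[of z u] by (simp add: Jl)
  then show "u = 0" using posz[OF zn] by simp
qed

definition Dpair :: "'z \<Rightarrow> 'z \<Rightarrow> ('v \<times> 'z) \<Rightarrow>\<^sub>L ('v \<times> 'z)" where
  "Dpair x y = Blinfun (\<lambda>p. (ader x y (fst p), Ader x y (snd p)))"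

lemma Dpair_apply: "blinfun_apply (Dpair x y) p = (ader x y (fst p), Ader x y (snd p))"
proof -
  have "linear (\<lambda>p::'v \<times> 'z. (ader x y (fst p), Ader x y (snd p)))"
    by (rule linearI) (simp_all add: linear_add[OF lin_ader] linear_add[OF lin_Ader]
        linear_scale[OF lin_ader] linear_scale[OF lin_Ader])
  then have "bounded_linear (\<lambda>p::'v \<times> 'z. (ader x y (fst p), Ader x y (snd p)))"
    using linear_conv_bounded_linear by blast
  then show ?thesis unfolding Dpair_def by (simp add: bounded_linear_Blinfun_apply)
qed

lemma Dpair_Der: "Dpair x y \<in> Der H"
  unfolding Der_def nil_bracket_def
  by (auto simp: Dpair_apply linear_0[OF lin_ader] der_H)

lemma Rz_Dpair: "blinfun_apply (Rz (Dpair x y)) q = Ader x y q"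
  by (simp add: Dpair_apply)

definition Ds :: "('v \<times> 'z) \<Rightarrow>\<^sub>L ('v \<times> 'z)" where
  "Ds = Blinfun (\<lambda>p. (fst p, 2 *\<^sub>R snd p))"

lemma Ds_apply: "blinfun_apply Ds p = (fst p, 2 *\<^sub>R snd p)"
proof -
  have "bounded_linear (\<lambda>p::'v \<times> 'z. (fst p, 2 *\<^sub>R snd p))"
    by (intro bounded_linear_Pair bounded_linear_fst bounded_linear_compose[OF bounded_linear_scaleR_right bounded_linear_snd])
  then show ?thesis unfolding Ds_def by (simp add: bounded_linear_Blinfun_apply)
qed

lemma Ds_Der: "Ds \<in> Der H"
  unfolding Der_def nil_bracket_def by (auto simp: Ds_apply scaleR_2)

lemma Rz_Ds: "blinfun_apply (Rz Ds) q = 2 *\<^sub>R q"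
  by (simp add: Ds_apply)

definition Gb :: "'z \<Rightarrow>\<^sub>L 'z" where "Gb = Blinfun Gm"

lemma Gb_apply: "blinfun_apply Gb x = Gm x"
proof -
  have "bounded_linear Gm" using lin_Gm linear_conv_bounded_linear by blast
  then show ?thesis unfolding Gb_def by (simp add: bounded_linear_Blinfun_apply)
qed

definition Phi :: "('z \<Rightarrow>\<^sub>L 'z) \<Rightarrow> ('z \<Rightarrow>\<^sub>L 'z)" where
  "Phi A = (Gb o\<^sub>L A) - adjB (Gb o\<^sub>L A)"

lemma Phi_inner: "Phi A q \<bullet> r = gz (A q) r - gz (A r) q"
  unfolding Phi_def by (simp add: blinfun.diff_left inner_diff_left adjB_inner Gb_apply Gm_inner inner_commute[of q])

lemma lin_Phi: "linear Phi"
  by (rule linearI; rule blinfun_eqI; rule inner_eqI)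
     (simp_all add: Phi_inner blinfun.bilinear_simps inner_add_left gz1 gz2 algebra_simps)

lemma dim_W_lower: "2 + DIM('z) * (DIM('z) - 1) \<le> 2 * dim (Rz ` Der H)"
proof -
  define W where "W = Rz ` Der H"
  have sW: "subspace W" unfolding W_def by (rule linear_subspace_image[OF linear_Rz subspace_Der[OF blH]])
  have rn: "dim W = dim {A\<in>W. Phi A = 0} + dim (Phi ` W)"
    by (rule rank_nullity[OF blinfun_indep_finite blinfun_indep_finite sW lin_Phi])
  have d1: "1 \<le> dim {A\<in>W. Phi A = 0}"
  proof -
    have inW: "Rz Ds \<in> W" unfolding W_def using Ds_Der by blast
    have "Phi (Rz Ds) = 0"
      by (rule blinfun_eqI, rule inner_eqI) (simp add: Phi_inner Ds_apply gz1 gz2 symz)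
    then have sub: "{Rz Ds} \<subseteq> {A\<in>W. Phi A = 0}" using inW by blast
    obtain q :: 'z where "q \<noteq> 0" using ex_nonzero_vec by blast
    then have "Rz Ds \<noteq> 0" using Rz_Ds[of q] by (metis blinfun.zero_left scaleR_eq_0_iff zero_neq_numeral)
    then have "independent {Rz Ds}" by simp
    from indep_card_le_dim[OF blinfun_indep_finite sub this] show ?thesis by simp
  qed
  obtain e where e: "bij_betw e {0..<DIM('z)} (Basis :: 'z set)"
    using ex_bij_betw_nat_finite[of "Basis :: 'z set"] by auto
  define P where "P = {(k, l). k < l \<and> l < DIM('z)}"
  have finP: "finite P" unfolding P_def by (rule finite_subset[of _ "{..<DIM('z)} \<times> {..<DIM('z)}"]) auto
  define fam where "fam p = (-2) *\<^sub>R Ek (e (fst p)) (e (snd p))" for p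
  have famW: "fam ` P \<subseteq> Phi ` W"
  proof
    fix A assume "A \<in> fam ` P"
    then obtain k l where A: "A = fam (k, l)" by auto
    define x where "x = gi (e k)"
    define y where "y = gi (e l)"
    have "Rz (Dpair x y) \<in> W" unfolding W_def using Dpair_Der by blast
    moreover have "Phi (Rz (Dpair x y)) = A"
    proof (rule blinfun_eqI, rule inner_eqI)
      fix q r
      show "Phi (Rz (Dpair x y)) q \<bullet> r = A q \<bullet> r"
        unfolding A fam_def Phi_inner Rz_Dpair Ader_def
        by (simp add: gz1 x_def y_def gz_gi Ek_apply blinfun.bilinear_simps inner_diff_left inner_commute algebra_simps)
    qed
    ultimately show "A \<in> Phi ` W" by blast
  qed
  have h: "\<forall>p\<in>P. c p = 0" if "(\<Sum>p\<in>P. c p *\<^sub>R fam p) = 0" for c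
  proof -
    have "(\<Sum>p\<in>P. (c p * -2) *\<^sub>R Ek (e (fst p)) (e (snd p))) = 0"
      using that unfolding fam_def by (simp add: mult.commute)
    then have "\<forall>p\<in>P. c p * -2 = 0" by (rule Ek_family[OF e P_def])
    then show ?thesis by simp
  qed
  have inj: "inj_on fam P" and ind: "independent (fam ` P)"
    using family_indep[OF finP h] by blast+
  have "card P \<le> dim (Phi ` W)"
    using indep_card_le_dim[OF blinfun_indep_finite famW ind] card_image[OF inj] by simp
  then show ?thesis using rn d1 card_pairs[of "DIM('z)"] unfolding P_def W_def by linarith
qed

end

lemma real_ineq_conv:
  fixes n m :: nat
  assumes "m \<ge> 1"
  shows "real (m * (m - 1)) = real m * (real m - 1)"
  using assms by (simp add: of_nat_diff)

theorem corollary2p4: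
  fixes B :: "'v::euclidean_space \<Rightarrow> 'v \<Rightarrow> 'z::euclidean_space"
  assumes "skew_bilinear B"
    and "\<exists>u w. B u w \<noteq> 0"
    and "center_is_z B"
    and "fat B"
  shows "dim_Aut_quot B \<le> 1 + real DIM('z) * (real DIM('z) - 1) / 2 \<and>
         (\<forall>H :: 'v \<Rightarrow> 'v \<Rightarrow> 'z. heisenberg_type H \<longrightarrow>
           dim_Aut_quot H = 1 + real DIM('z) * (real DIM('z) - 1) / 2)"
proof
  have m1: "DIM('z) \<ge> 1" by (simp add: DIM_positive Suc_leI)
  have rc: "real (DIM('z) * (DIM('z) - 1)) = real DIM('z) * (real DIM('z) - 1)"
    by (rule real_ineq_conv[OF m1])
  have blB: "bilinear B" using assms(1) unfolding skew_bilinear_def by blast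
  have fvB: "fatv B" by (rule fat_fatv[OF assms(4)])
  have "2 * dim (Rz ` Der B) \<le> 2 + DIM('z) * (DIM('z) - 1)" by (rule dim_W_upper[OF blB fvB])
  then have "real (2 * dim (Rz ` Der B)) \<le> real (2 + DIM('z) * (DIM('z) - 1))" by (rule of_nat_mono)
  then have "2 * real (dim (Rz ` Der B)) \<le> 2 + real DIM('z) * (real DIM('z) - 1)"
    using rc by simp
  then show "dim_Aut_quot B \<le> 1 + real DIM('z) * (real DIM('z) - 1) / 2"
    unfolding dim_quot_eq[OF blB fvB] by simp
  show "\<forall>H :: 'v \<Rightarrow> 'v \<Rightarrow> 'z. heisenberg_type H \<longrightarrow>
           dim_Aut_quot H = 1 + real DIM('z) * (real DIM('z) - 1) / 2"
  proof (intro allI impI)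
    fix H :: "'v \<Rightarrow> 'v \<Rightarrow> 'z"
    assume ht: "heisenberg_type H"
    then obtain gv gz where skH: "skew_bilinear H" and ipv: "inner_product_form gv"
      and ipz: "inner_product_form gz"
      and ex: "\<And>z. \<exists>T. linear T \<and> (\<forall>u w. gv (T u) w = gz z (H u w)) \<and> (\<forall>u. T (T u) = - (gz z z) *\<^sub>R u)"
      unfolding heisenberg_type_def by blast
    define J where "J z = (SOME T. linear T \<and> (\<forall>u w. gv (T u) w = gz z (H u w)) \<and> (\<forall>u. T (T u) = - (gz z z) *\<^sub>R u))" for z
    have Jp: "linear (J z) \<and> (\<forall>u w. gv (J z u) w = gz z (H u w)) \<and> (\<forall>u. J z (J z u) = - (gz z z) *\<^sub>R u)" for z
      unfolding J_def by (rule someI_ex[OF ex])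
    interpret hs: hsetup H gv gz J
      by (rule hsetup.intro) (use skH ipv ipz Jp in blast)+
    have blH: "bilinear H" by (rule hs.blH)
    have up: "2 * dim (Rz ` Der H) \<le> 2 + DIM('z) * (DIM('z) - 1)" by (rule dim_W_upper[OF blH hs.fatvH])
    have lo: "2 + DIM('z) * (DIM('z) - 1) \<le> 2 * dim (Rz ` Der H)" by (rule hs.dim_W_lower)
    have "2 * dim (Rz ` Der H) = 2 + DIM('z) * (DIM('z) - 1)" using up lo by linarith
    then have "real (2 * dim (Rz ` Der H)) = real (2 + DIM('z) * (DIM('z) - 1))" by simp
    then have "2 * real (dim (Rz ` Der H)) = 2 + real DIM('z) * (real DIM('z) - 1)"
      using rc by simp
    then show "dim_Aut_quot H = 1 + real DIM('z) * (real DIM('z) - 1) / 2"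
      unfolding dim_quot_eq[OF blH hs.fatvH] by simp
  qed
qed

end
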